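(* Let $X_1,\ldots,X_n$ be i.i.d. from $P$ on $\mathbb{R}^d$ satisfying (A1), (A2), (A3) and (A4') (see context). For a fixed point $x$, let $\delta(x)=\min\{\|X_i-x\|: p(X_i)>p(x)\}$ (with $\delta(x)=L$, a fixed positive constant, if no such $X_i$ exists). If $x$ is not a mode of $p$, then $n\,\delta^d(x)$ converges in distribution to an exponential random variable with rate parameter $p(x)\,\tau\,v_d$, where $v_d$ is the volume of the unit ball in $\mathbb{R}^d$. If $x$ is a mode, then $n\,\delta^d(x)\to\infty$.
   Context: (A1) $P$ is supported on a compact set $\mathcal{C}$ with bounded continuous density $p$, $\inf_{x\in\mathcal{C}}p(x)\ge a>0$. (A2) $p$ has bounded continuous first, second and third derivatives. (A3) $p$ is Morse (Hessian nondegenerate at every critical point) with finitely many critical points. A mode is a strict local maximum of $p$; $\mathcal{M}$ is the set of modes. (A4') With $L_x=\{y:p(y)>p(x)\}$ and $\mu$ Lebesgue measure: there exists $\tau\in(0,1)$ such that for every $x\notin\mathcal{M}$, $\lim_{t\to0}\mu(L_x\cap B(x,t))/\mu(B(x,t))=\tau$. *)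

theory Defs
  imports "HOL-Probability.Probability"
begin

definition is_mode :: "('a::metric_space \<Rightarrow> real) \<Rightarrow> 'a \<Rightarrow> bool" where
  "is_mode p x \<longleftrightarrow> (\<exists>e>0. \<forall>y. y \<noteq> x \<and> dist y x < e \<longrightarrow> p y < p x)"

text \<open>delta(x) for the sample X_0, ..., X_(n-1) (indices shifted by one);
  equals L if no sample point has higher density than x.\<close>
definition nn_higher_dist ::
  "('a::real_normed_vector \<Rightarrow> real) \<Rightarrow> real \<Rightarrow> 'a \<Rightarrow> (nat \<Rightarrow> 'b \<Rightarrow> 'a) \<Rightarrow> nat \<Rightarrow> 'b \<Rightarrow> real" where
  "nn_higher_dist p L x X n \<omega> =
     (if \<exists>i<n. p (X i \<omega>) > p x
      then Min {norm (X i \<omega> - x) | i. i < n \<and> p (X i \<omega>) > p x}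
      else L)"

end

theory Submission
  imports Defs "HOL-Analysis.Ball_Volume"
begin

lemma pow_exp_limit:
  fixes q :: "nat \<Rightarrow> real"
  assumes lim: "(\<lambda>n. real n * q n) \<longlonglongrightarrow> t"
  shows "(\<lambda>n. (1 - q n) ^ n) \<longlonglongrightarrow> exp (- t)"
proof -
  have q0: "q \<longlonglongrightarrow> 0"
  proof -
    have "(\<lambda>n. (real n * q n) * inverse (real n)) \<longlonglongrightarrow> t * 0"
      by (intro tendsto_mult lim tendsto_inverse_0_at_top filterlim_real_sequentially)
    moreover have "eventually (\<lambda>n. (real n * q n) * inverse (real n) = q n) sequentially"
      using eventually_gt_at_top[of "0::nat"] by eventually_elim auto
    ultimately show ?thesis by (simp add: tendsto_cong)
  qed
  then have ev: "eventually (\<lambda>n. \<bar>q n\<bar> \<le> 1/2) sequentially"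
    by (rule order_tendstoD(2)[OF tendsto_rabs_zero, of _ _ "1/2", THEN eventually_mono]) auto
  define e where "e n = real n * (ln (1 - q n) + q n)" for n
  have e0: "e \<longlonglongrightarrow> 0"
  proof (rule Lim_null_comparison)
    show "eventually (\<lambda>n. norm (e n) \<le> 2 * \<bar>real n * q n\<bar> * \<bar>q n\<bar>) sequentially"
      using ev
    proof eventually_elim
      case (elim n)
      have "\<bar>ln (1 + - q n) - - q n\<bar> \<le> 2 * (- q n)\<^sup>2"
        by (rule abs_ln_one_plus_x_minus_x_bound) (use elim in auto)
      then have "\<bar>ln (1 - q n) + q n\<bar> \<le> 2 * (q n)\<^sup>2" by simp
      then have "real n * \<bar>ln (1 - q n) + q n\<bar> \<le> real n * (2 * (q n)\<^sup>2)"
        by (intro mult_left_mono) auto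
      moreover have "real n * (2 * (q n)\<^sup>2) = 2 * \<bar>real n * q n\<bar> * \<bar>q n\<bar>"
        by (simp add: abs_mult power2_eq_square algebra_simps)
      ultimately show ?case by (simp add: e_def abs_mult)
    qed
    show "(\<lambda>n. 2 * \<bar>real n * q n\<bar> * \<bar>q n\<bar>) \<longlonglongrightarrow> 0"
      using tendsto_mult[OF tendsto_mult[OF tendsto_const[of 2] tendsto_rabs[OF lim]] tendsto_rabs_zero[OF q0]] by simp
  qed
  have "(\<lambda>n. exp (e n - real n * q n)) \<longlonglongrightarrow> exp (0 - t)"
    by (intro tendsto_intros e0 lim)
  moreover have "eventually (\<lambda>n. exp (e n - real n * q n) = (1 - q n) ^ n) sequentially"
    using ev
  proof eventually_elim
    case (elim n)
    then have pos: "1 - q n > 0" by auto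
    have "exp (e n - real n * q n) = exp (real n * ln (1 - q n))"
      by (simp add: e_def algebra_simps)
    also have "\<dots> = exp (ln (1 - q n)) ^ n" by (rule exp_of_nat_mult)
    also have "\<dots> = (1 - q n) ^ n" using pos by simp
    finally show ?case .
  qed
  ultimately show ?thesis by (simp add: tendsto_cong)
qed

lemma density_bound:
  fixes p :: "'a::euclidean_space \<Rightarrow> real"
  assumes pm: "p \<in> borel_measurable borel" and pn: "\<And>y. p y \<ge> 0"
    and A: "A \<in> sets borel" and Ab: "emeasure lborel A < \<infinity>"
    and c0: "c \<ge> 0" and e0: "\<epsilon> \<ge> 0"
    and cl: "\<And>z. z \<in> A \<Longrightarrow> \<bar>p z - c\<bar> \<le> \<epsilon>"
  shows "\<bar>measure (density lborel p) A - c * measure lborel A\<bar> \<le> \<epsilon> * measure lborel A"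
proof -
  define m where "m = measure lborel A"
  have m0: "m \<ge> 0" by (simp add: m_def)
  have Am: "emeasure lborel A = ennreal m"
    using Ab by (simp add: m_def emeasure_eq_ennreal_measure)
  have A': "A \<in> sets lborel" using A by simp
  have E: "emeasure (density lborel p) A = (\<integral>\<^sup>+ z. ennreal (p z) * indicator A z \<partial>lborel)"
    by (rule emeasure_density) (use pm A' in auto)
  have up: "(\<integral>\<^sup>+ z. ennreal (p z) * indicator A z \<partial>lborel) \<le> (\<integral>\<^sup>+ z. ennreal (c + \<epsilon>) * indicator A z \<partial>lborel)"
    by (intro nn_integral_mono) (auto split: split_indicator intro!: ennreal_leI dest!: cl)
  also have "\<dots> = ennreal (c + \<epsilon>) * emeasure lborel A"
    by (rule nn_integral_cmult_indicator) (use A' in auto)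
  also have "\<dots> = ennreal ((c + \<epsilon>) * m)" by (subst ennreal_mult) (auto simp: Am m0 c0 e0)
  finally have up': "emeasure (density lborel p) A \<le> ennreal ((c + \<epsilon>) * m)" using E by simp
  have "ennreal (max 0 (c - \<epsilon>) * m) = ennreal (max 0 (c - \<epsilon>)) * emeasure lborel A"
    by (subst ennreal_mult) (auto simp: Am m0)
  also have "\<dots> = (\<integral>\<^sup>+ z. ennreal (max 0 (c - \<epsilon>)) * indicator A z \<partial>lborel)"
    by (rule nn_integral_cmult_indicator[symmetric]) (use A' in auto)
  also have "\<dots> \<le> (\<integral>\<^sup>+ z. ennreal (p z) * indicator A z \<partial>lborel)"
    by (intro nn_integral_mono) (auto split: split_indicator intro!: ennreal_leI dest!: cl simp: pn)
  finally have lo': "ennreal (max 0 (c - \<epsilon>) * m) \<le> emeasure (density lborel p) A" using E by simp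
  have fin: "emeasure (density lborel p) A \<noteq> \<infinity>" using up' by (auto simp: top_unique)
  have eq: "emeasure (density lborel p) A = ennreal (measure (density lborel p) A)"
    using fin by (simp add: emeasure_eq_ennreal_measure)
  have Q0: "measure (density lborel p) A \<ge> 0" by simp
  have u: "measure (density lborel p) A \<le> (c + \<epsilon>) * m"
    using up' eq Q0 m0 c0 e0 by (simp add: ennreal_le_iff)
  have l: "max 0 (c - \<epsilon>) * m \<le> measure (density lborel p) A"
    using lo' eq Q0 m0 by (simp add: ennreal_le_iff2) (smt (verit) Q0)
  have "(c - \<epsilon>) * m \<le> max 0 (c - \<epsilon>) * m" using m0 by (intro mult_right_mono) auto
  then show ?thesis using u l m0 e0 unfolding m_def[symmetric] by (auto simp: algebra_simps abs_le_iff)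
qed

lemma ratio_lim:
  fixes p :: "'a::euclidean_space \<Rightarrow> real" and x :: 'a
  assumes pm: "p \<in> borel_measurable borel" and pn: "\<And>y. p y \<ge> 0"
    and cont: "continuous_on C p" and xC: "x \<in> C" and HC: "{z. p z > p x} \<subseteq> C"
    and A4x: "((\<lambda>t. measure lborel ({z. p z > p x} \<inter> ball x t) / measure lborel (ball x t)) \<longlongrightarrow> \<tau>) (at_right 0)"
  shows "((\<lambda>r. measure (density lborel p) ({z. p z > p x} \<inter> cball x r) / (unit_ball_vol (DIM('a)) * r ^ DIM('a)))
           \<longlongrightarrow> p x * \<tau>) (at_right 0)"
proof -
  define H where "H = {z. p z > p x}"
  have Hm: "H \<in> sets borel" using pm unfolding H_def by measurable
  have sph: "sphere x r \<in> null_sets lborel" for r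
    using negligible_sphere[of x r]
    by (auto simp: null_sets_completion_iff negligible_iff_null_sets negligible_convex_frontier)
  have mA: "measure lborel (H \<inter> cball x r) = measure lborel (H \<inter> ball x r)" for r
  proof -
    have "H \<inter> cball x r = (H \<inter> ball x r) \<union> (H \<inter> sphere x r)" by auto
    moreover have "H \<inter> sphere x r \<in> null_sets lborel"
      by (rule null_sets_subset[OF sph]) (use Hm in auto)
    moreover have "H \<inter> ball x r \<in> sets lborel" using Hm by auto
    ultimately show ?thesis by (simp add: measure_Un_null_set)
  qed
  define V where "V r = unit_ball_vol (DIM('a)) * r ^ DIM('a)" for r
  define Q where "Q r = measure (density lborel p) (H \<inter> cball x r)" for r
  define R where "R r = measure lborel (H \<inter> cball x r) / V r" for r
  have R: "(R \<longlongrightarrow> \<tau>) (at_right 0)"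
  proof -
    have "eventually (\<lambda>t. measure lborel ({z. p z > p x} \<inter> ball x t) / measure lborel (ball x t) = R t) (at_right (0::real))"
      using eventually_at_right_less[of "0::real"]
      by eventually_elim (simp add: R_def mA[unfolded H_def] V_def content_ball H_def)
    with A4x show ?thesis by (rule Lim_transform_eventually)
  qed
  have D: "((\<lambda>r. Q r / V r - p x * R r) \<longlongrightarrow> 0) (at_right 0)"
    unfolding tendsto_iff
  proof (intro allI impI)
    fix e :: real assume e: "e > 0"
    from cont xC e obtain dl where dl: "dl > 0" "\<And>z. z \<in> C \<Longrightarrow> dist z x < dl \<Longrightarrow> dist (p z) (p x) < e/2"
      unfolding continuous_on_iff by (metis half_gt_zero)
    show "eventually (\<lambda>r. dist (Q r / V r - p x * R r) 0 < e) (at_right 0)"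
      unfolding eventually_at_right_field
    proof (intro exI[of _ dl] conjI allI impI)
      fix r :: real assume r: "r > 0" "r < dl"
      have V0: "V r > 0" using r by (simp add: V_def)
      have Ab: "emeasure lborel (H \<inter> cball x r) < \<infinity>"
        by (rule emeasure_bounded_finite) (meson bounded_cball bounded_subset inf_le2)
      have bd: "\<bar>Q r - p x * measure lborel (H \<inter> cball x r)\<bar> \<le> e/2 * measure lborel (H \<inter> cball x r)"
        unfolding Q_def
      proof (rule density_bound[OF pm pn _ Ab])
        show "H \<inter> cball x r \<in> sets borel" using Hm by auto
        show "p x \<ge> 0" by (rule pn)
        show "e/2 \<ge> 0" using e by simp
        fix z assume z: "z \<in> H \<inter> cball x r"
        then have "z \<in> C" using HC H_def by auto
        moreover have "dist z x < dl" using z r by (auto simp: dist_commute)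
        ultimately show "\<bar>p z - p x\<bar> \<le> e/2" using dl(2)[of z] by (simp add: dist_real_def)
      qed
      have le: "measure lborel (H \<inter> cball x r) \<le> V r"
      proof -
        have "measure lborel (H \<inter> cball x r) \<le> measure lborel (cball x r)"
          by (rule measure_mono_fmeasurable) (use Hm in \<open>auto intro: fmeasurable_compact\<close>)
        also have "\<dots> = V r" using r by (simp add: V_def content_cball)
        finally show ?thesis .
      qed
      have "\<bar>Q r / V r - p x * R r\<bar> = \<bar>Q r - p x * measure lborel (H \<inter> cball x r)\<bar> / V r"
        using V0 by (simp add: R_def field_simps)
      also have "\<dots> \<le> e/2 * measure lborel (H \<inter> cball x r) / V r"
        using V0 bd by (intro divide_right_mono) auto
      also have "\<dots> \<le> e/2 * V r / V r"
        using V0 le e by (intro divide_right_mono mult_left_mono) auto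
      also have "\<dots> < e" using V0 e by simp
      finally show "dist (Q r / V r - p x * R r) 0 < e" by simp
    qed (use dl in auto)
  qed
  have "((\<lambda>r. (Q r / V r - p x * R r) + p x * R r) \<longlongrightarrow> 0 + p x * \<tau>) (at_right 0)"
    by (intro tendsto_intros D R)
  then show ?thesis by (simp add: Q_def V_def H_def)
qed

theorem theorem3:
  fixes M :: "'b measure"
    and X :: "nat \<Rightarrow> 'b \<Rightarrow> 'a::euclidean_space"
    and p :: "'a \<Rightarrow> real"
    and C :: "'a set"
    and a L \<tau> :: real
    and D1 :: "'a \<Rightarrow> ('a \<Rightarrow>\<^sub>L real)"
    and D2 :: "'a \<Rightarrow> ('a \<Rightarrow>\<^sub>L ('a \<Rightarrow>\<^sub>L real))"
    and D3 :: "'a \<Rightarrow> ('a \<Rightarrow>\<^sub>L ('a \<Rightarrow>\<^sub>L ('a \<Rightarrow>\<^sub>L real)))"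
    and x :: 'a
  assumes prob: "prob_space M"
    and rv: "\<And>i. X i \<in> borel_measurable M"
    and indep: "prob_space.indep_vars M (\<lambda>_. borel) X UNIV"
    and distr: "\<And>i. distr M borel (X i) = density lborel p"
    \<comment> \<open>(A1)\<close>
    and p_meas: "p \<in> borel_measurable borel"
    and p_nonneg: "\<And>y. p y \<ge> 0"
    and C_compact: "compact C"
    and p_supp: "\<And>y. y \<notin> C \<Longrightarrow> p y = 0"
    and p_bdd: "bounded (range p)"
    and p_cont: "continuous_on C p"
    and a_pos: "a > 0"
    and p_lower: "\<And>y. y \<in> C \<Longrightarrow> p y \<ge> a"
    \<comment> \<open>(A2): derivatives of order 1, 2, 3 on the interior of C, bounded and continuous\<close>
    and D1_deriv: "\<And>y. y \<in> interior C \<Longrightarrow> (p has_derivative blinfun_apply (D1 y)) (at y)"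
    and D2_deriv: "\<And>y. y \<in> interior C \<Longrightarrow> (D1 has_derivative blinfun_apply (D2 y)) (at y)"
    and D3_deriv: "\<And>y. y \<in> interior C \<Longrightarrow> (D2 has_derivative blinfun_apply (D3 y)) (at y)"
    and D1_cont: "continuous_on (interior C) D1"
    and D2_cont: "continuous_on (interior C) D2"
    and D3_cont: "continuous_on (interior C) D3"
    and D1_bdd: "bounded (D1 ` interior C)"
    and D2_bdd: "bounded (D2 ` interior C)"
    and D3_bdd: "bounded (D3 ` interior C)"
    \<comment> \<open>(A3): Morse with finitely many critical points\<close>
    and crit_finite: "finite {y \<in> interior C. D1 y = 0}"
    and morse: "\<And>y v. y \<in> interior C \<Longrightarrow> D1 y = 0 \<Longrightarrow> v \<noteq> 0 \<Longrightarrow> blinfun_apply (D2 y) v \<noteq> 0"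
    \<comment> \<open>(A4')\<close>
    and tau: "0 < \<tau>" "\<tau> < 1"
    and A4: "\<And>y. y \<in> C \<Longrightarrow> \<not> is_mode p y \<Longrightarrow>
              ((\<lambda>t. measure lborel ({z. p z > p y} \<inter> ball y t) / measure lborel (ball y t))
                 \<longlongrightarrow> \<tau>) (at_right 0)"
    and L_pos: "L > 0"
    and x_in: "x \<in> C"
  shows "(\<not> is_mode p x \<longrightarrow>
            weak_conv_m
              (\<lambda>n. distr M borel (\<lambda>\<omega>. real n * nn_higher_dist p L x X n \<omega> ^ DIM('a)))
              (density lborel (exponential_density (p x * \<tau> * measure lborel (ball (0::'a) 1)))))
       \<and> (is_mode p x \<longrightarrow>
            (\<forall>K::real. ((\<lambda>n. measure M {\<omega> \<in> space M.
                 real n * nn_higher_dist p L x X n \<omega> ^ DIM('a) \<le> K}) \<longlongrightarrow> 0) sequentially))"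
proof -
  interpret P: prob_space M by (rule prob)
  define H where "H = {z. p z > p x}"
  define \<delta> where "\<delta> n \<omega> = nn_higher_dist p L x X n \<omega>" for n \<omega>
  define Y where "Y n \<omega> = real n * \<delta> n \<omega> ^ DIM('a)" for n \<omega>
  have Hm[measurable]: "H \<in> sets borel" using p_meas unfolding H_def by measurable
  have Xm[measurable]: "X i \<in> borel_measurable M" for i by (rule rv)
  have char: "\<delta> n \<omega> \<le> r \<longleftrightarrow> (\<exists>i<n. X i \<omega> \<in> H \<inter> cball x r) \<or> ((\<forall>i<n. X i \<omega> \<notin> H) \<and> L \<le> r)"
    for n \<omega> r
  proof (cases "\<exists>i<n. p (X i \<omega>) > p x")
    case True
    let ?S = "{norm (X i \<omega> - x) | i. i < n \<and> p (X i \<omega>) > p x}"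
    have "?S \<subseteq> (\<lambda>i. norm (X i \<omega> - x)) ` {..<n}" by auto
    then have fin: "finite ?S" by (rule finite_subset) auto
    have ne: "?S \<noteq> {}" using True by auto
    have "\<delta> n \<omega> = Min ?S" using True by (simp add: \<delta>_def nn_higher_dist_def)
    then show ?thesis using True Min_le_iff[OF fin ne]
      by (auto simp: H_def dist_norm norm_minus_commute)
  next
    case False then show ?thesis by (auto simp: \<delta>_def nn_higher_dist_def H_def)
  qed
  have dpos: "\<delta> n \<omega> > 0" for n \<omega>
  proof (rule ccontr)
    assume "\<not> \<delta> n \<omega> > 0"
    then have "\<delta> n \<omega> \<le> 0" by simp
    then show False using char[of n \<omega> 0] L_pos by (auto simp: H_def)
  qed
  have dm[measurable]: "\<delta> n \<in> borel_measurable M" for n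
    unfolding borel_measurable_iff_le
  proof
    fix r
    have "{w \<in> space M. \<delta> n w \<le> r} = {w \<in> space M. (\<exists>i<n. X i w \<in> H \<inter> cball x r) \<or> ((\<forall>i<n. X i w \<notin> H) \<and> L \<le> r)}"
      using char by blast
    also have "\<dots> = (\<Union>i\<in>{..<n}. X i -` (H \<inter> cball x r) \<inter> space M) \<union>
        (if L \<le> r then space M - (\<Union>i\<in>{..<n}. X i -` H \<inter> space M) else {})"
      by auto
    also have "\<dots> \<in> sets M"
    proof -
      have A: "(\<Union>i\<in>{..<n}. X i -` (H \<inter> cball x r) \<inter> space M) \<in> sets M"
        by (intro sets.finite_UN measurable_sets[OF Xm]) auto
      have B: "space M - (\<Union>i\<in>{..<n}. X i -` H \<inter> space M) \<in> sets M"
        by (intro sets.Diff sets.top sets.finite_UN measurable_sets[OF Xm] Hm) auto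
      show ?thesis using A B by auto
    qed
    finally show "{w \<in> space M. \<delta> n w \<le> r} \<in> sets M" .
  qed
  have Ym[measurable]: "Y n \<in> borel_measurable M" for n unfolding Y_def
    by (intro borel_measurable_times borel_measurable_power borel_measurable_const dm)
  have cdfY: "cdf (distr M borel (Y n)) s = P.prob {\<omega> \<in> space M. Y n \<omega> \<le> s}" for n s
  proof -
    have "cdf (distr M borel (Y n)) s = measure M (Y n -` {..s} \<inter> space M)"
      unfolding cdf_def by (rule measure_distr[OF Ym]) auto
    also have "Y n -` {..s} \<inter> space M = {\<omega> \<in> space M. Y n \<omega> \<le> s}" by auto
    finally show ?thesis .
  qed
  have Ydef: "(\<lambda>\<omega>. real n * nn_higher_dist p L x X n \<omega> ^ DIM('a)) = Y n" for n
    by (simp add: Y_def \<delta>_def fun_eq_iff)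
  have px: "p x \<ge> a" using p_lower x_in by simp
  have HC: "H \<subseteq> C"
  proof
    fix z assume "z \<in> H"
    then have "p z > 0" using px a_pos by (auto simp: H_def)
    then show "z \<in> C" using p_supp by force
  qed
  show ?thesis
  proof (intro conjI impI)
    assume nm: "\<not> is_mode p x"
    define v where "v = measure lborel (ball (0::'a) 1)"
    have v: "v = unit_ball_vol (real DIM('a))" by (simp add: v_def content_ball)
    have v0: "v > 0" by (simp add: v)
    define c where "c = p x * \<tau> * v"
    have c0: "c > 0" using px a_pos tau v0 by (simp add: c_def)
    define F where "F s = (if 0 \<le> s then 1 - exp (- c * s) else 0)" for s
    have cdfF: "cdf (density lborel (exponential_density c)) s = F s" for s
    proof -
      have "emeasure (density lborel (exponential_density c)) {..s} = ennreal (erlang_CDF 0 c s)"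
        by (rule emeasure_erlang_density[OF c0])
      then have "measure (density lborel (exponential_density c)) {..s} = erlang_CDF 0 c s"
        using erlang_CDF_nonneg[OF c0] by (simp add: measure_def)
      then show ?thesis by (simp add: cdf_def F_def erlang_CDF_0)
    qed
    have A4x: "((\<lambda>t. measure lborel ({z. p z > p x} \<inter> ball x t) / measure lborel (ball x t)) \<longlongrightarrow> \<tau>) (at_right 0)"
      by (rule A4[OF x_in nm])
    have RL: "((\<lambda>r. measure (density lborel p) (H \<inter> cball x r) / (v * r ^ DIM('a))) \<longlongrightarrow> p x * \<tau>) (at_right 0)"
      using ratio_lim[OF p_meas p_nonneg p_cont x_in HC[unfolded H_def] A4x] by (simp add: H_def v)
    have probX: "P.prob (X i -` A \<inter> space M) = measure (density lborel p) A" if "A \<in> sets borel" for i A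
      using measure_distr[OF rv[of i], of A, symmetric] that distr[of i] by simp
    have conv: "(\<lambda>n. cdf (distr M borel (Y n)) s) \<longlonglongrightarrow> F s" for s
    proof (cases "s > 0")
      case False
      have "eventually (\<lambda>n. 0 = cdf (distr M borel (Y n)) s) sequentially"
        using eventually_gt_at_top[of "0::nat"]
      proof eventually_elim
        case (elim n)
        have "{\<omega> \<in> space M. Y n \<omega> \<le> s} = {}"
        proof (rule equals0I)
          fix \<omega> assume "\<omega> \<in> {\<omega> \<in> space M. Y n \<omega> \<le> s}"
          then have "Y n \<omega> \<le> s" by simp
          moreover have "Y n \<omega> > 0" using elim dpos[of n \<omega>] by (simp add: Y_def)
          ultimately show False using False by simp
        qed
        then have "cdf (distr M borel (Y n)) s = 0" by (simp only: cdfY measure_empty)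
        then show ?case by simp
      qed
      moreover have "F s = 0" using False by (auto simp: F_def)
      ultimately show ?thesis using Lim_transform_eventually[OF tendsto_const[of "0::real"]] by simp
    next
      case True
      define r where "r n = root DIM('a) (s / real n)" for n
      have r0: "r \<longlonglongrightarrow> 0"
        using tendsto_real_root[OF lim_const_over_n[of s], of "DIM('a)"] unfolding r_def[abs_def] by simp
      have rpos: "eventually (\<lambda>n. r n > 0) sequentially"
        using eventually_gt_at_top[of "0::nat"] by eventually_elim (use True in \<open>auto simp: r_def\<close>)
      have r_at: "filterlim r (at_right 0) sequentially"
        by (rule tendsto_imp_filterlim_at_right[OF r0 rpos])
      have rL: "eventually (\<lambda>n. r n < L) sequentially"
        using order_tendstoD(2)[OF r0 L_pos] .
      define q where "q n = measure (density lborel p) (H \<inter> cball x (r n))" for n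
      have nq: "(\<lambda>n. real n * q n) \<longlonglongrightarrow> c * s"
      proof -
        have "(\<lambda>n. q n / (v * r n ^ DIM('a))) \<longlonglongrightarrow> p x * \<tau>"
          using filterlim_compose[OF RL r_at] by (simp add: q_def o_def)
        then have "(\<lambda>n. s * v * (q n / (v * r n ^ DIM('a)))) \<longlonglongrightarrow> s * v * (p x * \<tau>)"
          by (rule tendsto_mult_left)
        moreover have "eventually (\<lambda>n. s * v * (q n / (v * r n ^ DIM('a))) = real n * q n) sequentially"
          using eventually_gt_at_top[of "0::nat"]
        proof eventually_elim
          case (elim n)
          have h: "r n ^ DIM('a) = s / real n" using True by (simp add: r_def)
          show ?case unfolding h using elim v0 True by (simp add: field_simps)
        qed
        ultimately have "(\<lambda>n. real n * q n) \<longlonglongrightarrow> s * v * (p x * \<tau>)"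
          by (rule Lim_transform_eventually)
        moreover have "s * v * (p x * \<tau>) = c * s" by (simp add: c_def)
        ultimately show ?thesis by simp
      qed
      have cA0: "- A \<in> sets borel" if "A \<in> sets borel" for A :: "'a set"
        using borel_comp[OF that] .
      have ev: "eventually (\<lambda>n. 1 - (1 - q n) ^ n = cdf (distr M borel (Y n)) s) sequentially"
        using eventually_gt_at_top[of "0::nat"] rL
      proof eventually_elim
        case (elim n)
        define A where "A = H \<inter> cball x (r n)"
        have Am: "A \<in> sets borel" unfolding A_def using Hm by auto
        have cA: "- A \<in> sets borel" by (rule cA0[OF Am])
        have rn0: "r n \<ge> 0" using True by (simp add: r_def)
        have iff: "Y n \<omega> \<le> s \<longleftrightarrow> \<delta> n \<omega> \<le> r n" for \<omega>
        proof -
          have d0: "\<delta> n \<omega> \<ge> 0" using dpos[of n \<omega>] by simp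
          have "Y n \<omega> \<le> s \<longleftrightarrow> \<delta> n \<omega> ^ DIM('a) \<le> s / real n"
            using elim by (simp add: Y_def le_divide_eq mult.commute)
          also have "s / real n = r n ^ DIM('a)" using True by (simp add: r_def)
          also have "\<delta> n \<omega> ^ DIM('a) \<le> r n ^ DIM('a) \<longleftrightarrow> \<delta> n \<omega> \<le> r n"
            using d0 rn0 by (intro power_mono_iff) auto
          finally show ?thesis .
        qed
        have set: "{\<omega> \<in> space M. Y n \<omega> \<le> s} = space M - (\<Inter>i\<in>{..<n}. X i -` (- A) \<inter> space M)"
          using iff char[of n _ "r n"] elim by (auto simp: A_def)
        have "cdf (distr M borel (Y n)) s = P.prob (space M - (\<Inter>i\<in>{..<n}. X i -` (- A) \<inter> space M))"
          by (simp only: cdfY set)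
        also have "\<dots> = 1 - P.prob (\<Inter>i\<in>{..<n}. X i -` (- A) \<inter> space M)"
        proof (rule P.prob_compl)
          show "(\<Inter>i\<in>{..<n}. X i -` (- A) \<inter> space M) \<in> P.events"
            using elim by (intro sets.finite_INT measurable_sets[OF rv cA]) auto
        qed
        also have "P.prob (\<Inter>i\<in>{..<n}. X i -` (- A) \<inter> space M) = (\<Prod>i\<in>{..<n}. P.prob (X i -` (- A) \<inter> space M))"
          by (rule P.indep_varsD[OF indep]) (use elim cA in auto)
        also have "\<dots> = (\<Prod>i\<in>{..<n}. 1 - q n)"
        proof (rule prod.cong[OF refl])
          fix i
          have "X i -` (- A) \<inter> space M = space M - (X i -` A \<inter> space M)" by auto
          then have "P.prob (X i -` (- A) \<inter> space M) = 1 - P.prob (X i -` A \<inter> space M)"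
            using P.prob_compl[of "X i -` A \<inter> space M"] measurable_sets[OF rv Am] by simp
          also have "\<dots> = 1 - q n" using probX[OF Am] by (simp add: q_def A_def)
          finally show "P.prob (X i -` (- A) \<inter> space M) = 1 - q n" .
        qed
        also have "\<dots> = (1 - q n) ^ n" by simp
        finally show ?case by (rule sym)
      qed
      have "(\<lambda>n. 1 - (1 - q n) ^ n) \<longlonglongrightarrow> 1 - exp (- (c * s))"
        by (intro tendsto_diff tendsto_const pow_exp_limit nq)
      then have "(\<lambda>n. cdf (distr M borel (Y n)) s) \<longlonglongrightarrow> 1 - exp (- (c * s))"
        using ev by (rule Lim_transform_eventually)
      moreover have "F s = 1 - exp (- (c * s))" using True by (simp add: F_def)
      ultimately show ?thesis by simp
    qed
    have "weak_conv_m (\<lambda>n. distr M borel (Y n)) (density lborel (exponential_density c))"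
      unfolding weak_conv_m_def weak_conv_def cdfF using conv by simp
    then show "weak_conv_m (\<lambda>n. distr M borel (\<lambda>\<omega>. real n * nn_higher_dist p L x X n \<omega> ^ DIM('a))) (density lborel (exponential_density (p x * \<tau> * measure lborel (ball (0::'a) 1))))"
      by (simp add: Ydef c_def v_def)
  next
    assume md: "is_mode p x"
    obtain e where e: "e > 0" "\<And>y. y \<noteq> x \<Longrightarrow> dist y x < e \<Longrightarrow> p y < p x"
      using md unfolding is_mode_def by blast
    define m where "m = min e L"
    have m0: "m > 0" using e L_pos by (simp add: m_def)
    have lb: "\<delta> n \<omega> \<ge> m" for n \<omega>
    proof (rule ccontr)
      assume "\<not> m \<le> \<delta> n \<omega>"
      then have lt: "\<delta> n \<omega> < m" by simp
      then have "(\<exists>i<n. X i \<omega> \<in> H \<inter> cball x (\<delta> n \<omega>)) \<or> ((\<forall>i<n. X i \<omega> \<notin> H) \<and> L \<le> \<delta> n \<omega>)"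
        using char by blast
      then show False
      proof
        assume "\<exists>i<n. X i \<omega> \<in> H \<inter> cball x (\<delta> n \<omega>)"
        then obtain i where i: "p (X i \<omega>) > p x" "dist x (X i \<omega>) \<le> \<delta> n \<omega>" by (auto simp: H_def)
        then have "X i \<omega> \<noteq> x" by auto
        moreover have "dist (X i \<omega>) x < e" using i lt by (simp add: m_def dist_commute)
        ultimately show False using e(2) i(1) by force
      qed (use lt m_def in auto)
    qed
    show "\<forall>K. ((\<lambda>n. measure M {\<omega> \<in> space M. real n * nn_higher_dist p L x X n \<omega> ^ DIM('a) \<le> K}) \<longlongrightarrow> 0) sequentially"
    proof
      fix K :: real
      have mp: "m ^ DIM('a) > 0" using m0 by simp
      have "eventually (\<lambda>n. K / m ^ DIM('a) < real n) sequentially"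
        using filterlim_real_sequentially unfolding filterlim_at_top_dense by blast
      then have "eventually (\<lambda>n. measure M {\<omega> \<in> space M. Y n \<omega> \<le> K} = 0) sequentially"
      proof eventually_elim
        case (elim n)
        have "{\<omega> \<in> space M. Y n \<omega> \<le> K} = {}"
        proof (rule equals0I)
          fix \<omega> assume "\<omega> \<in> {\<omega> \<in> space M. Y n \<omega> \<le> K}"
          then have "Y n \<omega> \<le> K" by simp
          moreover have "K < real n * m ^ DIM('a)" using elim mp by (simp add: divide_less_eq)
          moreover have "real n * m ^ DIM('a) \<le> Y n \<omega>"
            unfolding Y_def using lb[of n \<omega>] m0 by (intro mult_left_mono power_mono) auto
          ultimately show False by simp
        qed
        then show ?case by (simp only: measure_empty)
      qed
      then show "((\<lambda>n. measure M {\<omega> \<in> space M. real n * nn_higher_dist p L x X n \<omega> ^ DIM('a) \<le> K}) \<longlongrightarrow> 0) sequentially"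
        unfolding Y_def \<delta>_def by (rule tendsto_eventually)
    qed
  qed
qed

end
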